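(* Let $m,n\ge 0$, $0\le k\le\min(m,n)$, and let $i,j$ be integers with $0\le i\le m$, $0\le j\le n$, $k\le i+j\le m+n-k$. Then $c_{m,n,k}(i,j)$ equals the coefficient of $x^jy^i$ in the power series expansion of $$\frac{(x+y)^{i+j-k}}{(1-x)^{m-k+1}(1+y)^{n-k+1}}.$$ In particular (case $i+j=k$), the coordinate of $f^i\phi_m\otimes f^{k-i}\phi_n$ in $\phi_{m,n,k}$ is the coefficient of $x^{k-i}y^i$ in $\frac{1}{(1-x)^{m-k+1}(1+y)^{n-k+1}}$.
   Context: Let $e,f,h$ be the standard basis of $\mathfrak{sl}(2,\mathbb{C})$. $V(n)$ is the irreducible representation of highest weight $n$ with fixed highest weight vector $\phi_n$; $\{f^i\phi_n\}_{0\le i\le n}$ is a basis, $f^{n+1}\phi_n=0$. $\mathfrak{sl}(2)$ acts on $V(m)\otimes V(n)$ by $X(v\otimes w)=Xv\otimes w+v\otimes Xw$. For $0\le k\le\min(m,n)$, let $\phi_{m,n,k}=\sum_{l=0}^{k}(-1)^l\binom{m-l}{k-l}\binom{n-k+l}{l} f^l\phi_m\otimes f^{k-l}\phi_n$ (a highest weight vector of weight $m+n-2k$). The coordinates $c_{m,n,k}(i,j)$ are defined by $f^{p-k}\phi_{m,n,k}=\sum_{i+j=p,\,0\le i\le m,\,0\le j\le n} c_{m,n,k}(i,j)\, f^i\phi_m\otimes f^j\phi_n$ for $k\le p\le m+n-k$. *)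

theory Defs
  imports Complex_Main "HOL-Computational_Algebra.Formal_Power_Series"
begin

text \<open>Elements of V(m) \<otimes> V(n) are represented by their coordinates with respect
  to the basis f^i phi_m \<otimes> f^j phi_n (0 \<le> i \<le> m, 0 \<le> j \<le> n): a function
  u :: nat \<Rightarrow> nat \<Rightarrow> complex, where u i j is the coordinate of
  f^i phi_m \<otimes> f^j phi_n (coordinates outside the index box are 0).\<close>

definition in_box :: "nat \<Rightarrow> nat \<Rightarrow> nat \<Rightarrow> nat \<Rightarrow> bool" where
  "in_box m n i j \<longleftrightarrow> i \<le> m \<and> j \<le> n"

text \<open>Action of f on V(m) \<otimes> V(n): f(v\<otimes>w) = fv\<otimes>w + v\<otimes>fw, with
  f(f^i phi) = f^(i+1) phi and f^(n+1) phi_n = 0.  In coordinates, the coefficient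
  of f^i phi_m \<otimes> f^j phi_n in f u is u (i-1) j + u i (j-1) (terms with a
  negative index absent).\<close>

definition f_tensor :: "nat \<Rightarrow> nat \<Rightarrow> (nat \<Rightarrow> nat \<Rightarrow> complex) \<Rightarrow> (nat \<Rightarrow> nat \<Rightarrow> complex)" where
  "f_tensor m n u = (\<lambda>i j. if in_box m n i j then
      (if 0 < i then u (i - 1) j else 0) + (if 0 < j then u i (j - 1) else 0)
    else 0)"

definition phi_mnk :: "nat \<Rightarrow> nat \<Rightarrow> nat \<Rightarrow> (nat \<Rightarrow> nat \<Rightarrow> complex)" where
  "phi_mnk m n k = (\<lambda>i j. \<Sum>l\<in>{0..k}.
      if i = l \<and> j = k - l \<and> in_box m n i j
      then (-1) ^ l * of_nat ((m - l) choose (k - l)) * of_nat ((n - k + l) choose l)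
      else 0)"

definition c_coord :: "nat \<Rightarrow> nat \<Rightarrow> nat \<Rightarrow> nat \<Rightarrow> nat \<Rightarrow> complex" where
  "c_coord m n k i j = ((f_tensor m n ^^ (i + j - k)) (phi_mnk m n k)) i j"

text \<open>Bivariate formal power series in x, y over \<complex> are modelled as
  complex fps fps: the outer variable is y, the inner one is x.\<close>

definition fpsX :: "complex fps fps" where "fpsX = fps_const fps_X"
definition fpsY :: "complex fps fps" where "fpsY = fps_X"

text \<open>coefficient of x^a y^b\<close>
definition coeff_xy :: "complex fps fps \<Rightarrow> nat \<Rightarrow> nat \<Rightarrow> complex" where
  "coeff_xy F a b = fps_nth (fps_nth F b) a"

end

theory Submission imports Defs begin

definition G :: "nat \<Rightarrow> 'a::comm_ring_1 \<Rightarrow> 'a fps" where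
  "G b c = Abs_fps (\<lambda>k. of_nat ((b+k-1) choose k) * c^k)"

lemma G_step: "G (Suc b) c * (1 - fps_const c * fps_X) = G b c"
proof -
  have e: "G (Suc b) c * (1 - fps_const c * fps_X) = G (Suc b) c - fps_const c * (fps_X * G (Suc b) c)"
    by (simp add: algebra_simps)
  show ?thesis unfolding e
  proof (rule fps_ext)
    fix k show "fps_nth (G (Suc b) c - fps_const c * (fps_X * G (Suc b) c)) k = fps_nth (G b c) k"
    proof (cases k)
      case 0 then show ?thesis by (simp add: G_def)
    next
      case (Suc k')
      have "((b + k' + 1) choose (k'+1)) = ((b+k') choose k') + ((b+k') choose (k'+1))"
        by simp
      then show ?thesis using Suc by (simp add: G_def algebra_simps)
    qed
  qed
qed

lemma G_inv: "G b c * (1 - fps_const c * fps_X) ^ b = 1"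
proof (induction b)
  case 0
  show ?case
  proof (simp, rule fps_ext)
    fix k show "fps_nth (G 0 c) k = fps_nth 1 k" by (cases k) (simp_all add: G_def binomial_eq_0)
  qed
next
  case (Suc b)
  have "G (Suc b) c * (1 - fps_const c * fps_X) ^ Suc b = (G (Suc b) c * (1 - fps_const c * fps_X)) * (1 - fps_const c * fps_X) ^ b"
    by (simp add: algebra_simps)
  also have "\<dots> = 1" using Suc by (simp add: G_step)
  finally show ?case .
qed


lemma coeff_shift:
  "coeff_xy ((fpsX + fpsY) * F) j i =
     (if 0 < j then coeff_xy F (j - 1) i else 0) + (if 0 < i then coeff_xy F j (i - 1) else 0)"
proof -
  have "(fpsX + fpsY) * F = fps_const fps_X * F + fps_X * F"
    by (simp add: fpsX_def fpsY_def algebra_simps)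
  then show ?thesis
    by (cases i; cases j) (simp_all add: coeff_xy_def)
qed

lemma inv_D:
  fixes a b :: nat
  defines "D \<equiv> (1 - fpsX) ^ a * (1 + fpsY) ^ b"
  shows "inverse D = fps_const (G a (1::complex)) * Abs_fps (\<lambda>i. fps_const (fps_nth (G b (-1::complex)) i))"
proof -
  define P :: "complex fps" where "P = (1 - fps_X) ^ a"
  have P: "G a (1::complex) * P = 1" using G_inv[of a "1::complex"] by (simp add: P_def)
  have DP: "D = fps_const P * (1 + fps_X) ^ b"
  proof -
    have "1 - fpsX = fps_const (1 - fps_X)" by (simp add: fpsX_def fps_const_sub[symmetric])
    then show ?thesis by (simp add: D_def P_def fpsY_def fps_const_power)
  qed
  define B where "B = Abs_fps (\<lambda>i. fps_const (fps_nth (G b (-1::complex)) i))"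
  have B: "B = G b (-1 :: complex fps)"
  proof -
    have m1: "(-1::complex fps) = fps_const (-1)" by (metis fps_const_neg fps_const_1_eq_1)
    show ?thesis by (rule fps_ext) (simp add: B_def G_def fps_of_nat[symmetric] m1 del: fps_const_neg)
  qed
  have B1: "B * (1 + fps_X) ^ b = 1"
  proof -
    have "1 - fps_const (-1 :: complex fps) * fps_X = 1 + fps_X"
      by (metis fps_const_neg fps_const_1_eq_1 diff_minus_eq_add mult_minus_left mult_1)
    moreover have "G b (-1 :: complex fps) * (1 - fps_const (-1 :: complex fps) * fps_X) ^ b = 1" by (rule G_inv)
    ultimately show ?thesis unfolding B by (simp only:)
  qed
  define Q where "Q = fps_const (G a (1::complex)) * B"
  have QD: "Q * D = 1"
  proof -
    have "Q * D = (fps_const (G a 1) * fps_const P) * (B * (1 + fps_X) ^ b)"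
      by (simp only: Q_def DP mult_ac)
    also have "\<dots> = 1" using P B1 by simp
    finally show ?thesis .
  qed
  have D0: "fps_nth D 0 = P" by (simp add: DP fps_nth_power_0)
  have P0: "fps_nth P 0 \<noteq> 0" by (simp add: P_def fps_nth_power_0)
  have PI: "P * inverse P = 1" using inverse_mult_eq_1'[OF P0] .
  have ID: "inverse D = fps_right_inverse D (inverse (fps_nth D 0))" by (fact fps_inverse_def)
  have "D * fps_right_inverse D (inverse (fps_nth D 0)) = 1"
    by (rule fps_right_inverse) (simp only: D0 PI)
  then have "D * inverse D = 1" by (simp only: ID)
  then have "inverse D = Q"
  proof -
    assume DR: "D * inverse D = 1"
    have "Q = Q * (D * inverse D)" using DR by simp
    also have "\<dots> = (Q * D) * inverse D" by (simp only: mult.assoc)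
    also have "\<dots> = inverse D" using QD by simp
    finally show ?thesis by simp
  qed
  then show ?thesis by (simp add: Q_def B_def)
qed


lemma phi_diag:
  assumes "k \<le> m" "k \<le> n" "i \<le> k"
  shows "phi_mnk m n k i (k - i) = (-1) ^ i * of_nat ((m - i) choose (k - i)) * of_nat ((n - k + i) choose i)"
proof -
  have "phi_mnk m n k i (k - i) = (\<Sum>l\<in>{0..k}. if l = i then
      (-1) ^ l * of_nat ((m - l) choose (k - l)) * of_nat ((n - k + l) choose l) else 0)"
    unfolding phi_mnk_def
    by (rule sum.cong) (use assms in \<open>auto simp: in_box_def\<close>)
  also have "\<dots> = (-1) ^ i * of_nat ((m - i) choose (k - i)) * of_nat ((n - k + i) choose i)"
    using assms by (simp add: sum.delta)
  finally show ?thesis .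
qed

lemma inv_coeff:
  assumes "k \<le> m" "k \<le> n" "i \<le> k"
  shows "coeff_xy (inverse ((1 - fpsX) ^ (m - k + 1) * (1 + fpsY) ^ (n - k + 1))) (k - i) i
     = (-1) ^ i * of_nat ((m - i) choose (k - i)) * of_nat ((n - k + i) choose i)"
proof -
  have e1: "m - k + (k - i) = m - i" using assms by simp
  have e2: "n - k + 1 + i - 1 = n - k + i" using assms by simp
  show ?thesis
    unfolding inv_D coeff_xy_def
    by (simp add: G_def e1 e2 fps_mult_right_const_nth)
qed

lemma main_ind:
  assumes "k \<le> m" "k \<le> n"
  shows "\<forall>i j. i \<le> m \<longrightarrow> j \<le> n \<longrightarrow> i + j = k + N \<longrightarrow>
     (f_tensor m n ^^ N) (phi_mnk m n k) i j =
     coeff_xy ((fpsX + fpsY) ^ N * inverse ((1 - fpsX) ^ (m - k + 1) * (1 + fpsY) ^ (n - k + 1))) j i"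
proof (induction N)
  case 0
  show ?case
  proof (intro allI impI)
    fix i j assume h: "i \<le> m" "j \<le> n" "i + j = k + 0"
    then have j: "j = k - i" and i: "i \<le> k" by auto
    show "(f_tensor m n ^^ 0) (phi_mnk m n k) i j =
     coeff_xy ((fpsX + fpsY) ^ 0 * inverse ((1 - fpsX) ^ (m - k + 1) * (1 + fpsY) ^ (n - k + 1))) j i"
      using phi_diag[OF assms i] inv_coeff[OF assms i] j by simp
  qed
next
  case (Suc N)
  show ?case
  proof (intro allI impI)
    fix i j assume h: "i \<le> m" "j \<le> n" "i + j = k + Suc N"
    let ?R = "inverse ((1 - fpsX) ^ (m - k + 1) * (1 + fpsY) ^ (n - k + 1))"
    let ?u = "(f_tensor m n ^^ N) (phi_mnk m n k)"
    have "(f_tensor m n ^^ Suc N) (phi_mnk m n k) i j =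
        (if 0 < i then ?u (i - 1) j else 0) + (if 0 < j then ?u i (j - 1) else 0)"
      using h by (simp add: f_tensor_def in_box_def)
    also have "\<dots> = (if 0 < i then coeff_xy ((fpsX + fpsY) ^ N * ?R) j (i - 1) else 0)
        + (if 0 < j then coeff_xy ((fpsX + fpsY) ^ N * ?R) (j - 1) i else 0)"
      using Suc.IH h by auto
    also have "\<dots> = coeff_xy ((fpsX + fpsY) * ((fpsX + fpsY) ^ N * ?R)) j i"
      by (simp add: coeff_shift)
    also have "(fpsX + fpsY) * ((fpsX + fpsY) ^ N * ?R) = (fpsX + fpsY) ^ Suc N * ?R"
      by (simp add: mult.assoc)
    finally show "(f_tensor m n ^^ Suc N) (phi_mnk m n k) i j = coeff_xy ((fpsX + fpsY) ^ Suc N * ?R) j i" .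
  qed
qed

theorem mainTheorem4:
  fixes m n k :: nat
  assumes "k \<le> m" and "k \<le> n"
  shows "(\<forall>i j. i \<le> m \<longrightarrow> j \<le> n \<longrightarrow> k \<le> i + j \<longrightarrow> i + j \<le> m + n - k \<longrightarrow>
            c_coord m n k i j =
            coeff_xy ((fpsX + fpsY) ^ (i + j - k)
                      * inverse ((1 - fpsX) ^ (m - k + 1) * (1 + fpsY) ^ (n - k + 1))) j i)
       \<and> (\<forall>i. i \<le> k \<longrightarrow>
            phi_mnk m n k i (k - i) =
            coeff_xy (inverse ((1 - fpsX) ^ (m - k + 1) * (1 + fpsY) ^ (n - k + 1))) (k - i) i)"
proof (intro conjI allI impI)
  fix i j assume h: "i \<le> m" "j \<le> n" "k \<le> i + j" "i + j \<le> m + n - k"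
  show "c_coord m n k i j =
            coeff_xy ((fpsX + fpsY) ^ (i + j - k)
                      * inverse ((1 - fpsX) ^ (m - k + 1) * (1 + fpsY) ^ (n - k + 1))) j i"
  proof -
    have "i + j = k + (i + j - k)" using h by simp
    then show ?thesis unfolding c_coord_def using main_ind[OF assms, of "i + j - k", rule_format, OF h(1) h(2)] by blast
  qed
next
  fix i assume "i \<le> k"
  then show "phi_mnk m n k i (k - i) =
            coeff_xy (inverse ((1 - fpsX) ^ (m - k + 1) * (1 + fpsY) ^ (n - k + 1))) (k - i) i"
    using phi_diag[OF assms \<open>i \<le> k\<close>] inv_coeff[OF assms \<open>i \<le> k\<close>] by (simp only:)
qed

end
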